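(* Let $S$ be an intra-regular $\Gamma$-AG$^{**}$-groupoid and $A\subseteq S$ nonempty. Then $A$ is a $\Gamma$-$(1,2)$-ideal of $S$ if and only if $(A\Gamma S)\Gamma (A\Gamma A)=A$ and $A\Gamma A=A$.
   Context: Let $S$ and $\Gamma$ be nonempty sets with a map $S\times\Gamma\times S\to S$, $(x,\gamma,y)\mapsto x\gamma y$. $S$ is a $\Gamma$-AG-groupoid if $(x\gamma y)\delta z=(z\gamma y)\delta x$ for all $x,y,z\in S$, $\gamma,\delta\in\Gamma$; it is a $\Gamma$-AG$^{**}$-groupoid if moreover $a\alpha(b\beta c)=b\alpha(a\beta c)$ for all $a,b,c\in S$, $\alpha,\beta\in\Gamma$. For subsets $A,B\subseteq S$, $A\Gamma B=\{a\gamma b: a\in A,\gamma\in\Gamma,b\in B\}$. $S$ is intra-regular if for every $a\in S$ there exist $x,y\in S$ and $\beta,\gamma,\delta\in\Gamma$ with $a=(x\beta(a\delta a))\gamma y$. A nonempty subset $A$ is a $\Gamma$-$(1,2)$-ideal if $A\Gamma A\subseteq A$ and $(A\Gamma S)\Gamma(A\Gamma A)\subseteq A$. *)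

theory Defs
  imports Main
begin

text \<open>A Gamma-groupoid on S (the type 's) with Gamma (the type 'g) is a ternary map
  f :: 's => 'g => 's => 's, written x gamma y = f x gamma y.\<close>

definition Gamma_AG :: "('s \<Rightarrow> 'g \<Rightarrow> 's \<Rightarrow> 's) \<Rightarrow> bool" where
  "Gamma_AG f \<longleftrightarrow> (\<forall>x y z \<gamma> \<delta>. f (f x \<gamma> y) \<delta> z = f (f z \<gamma> y) \<delta> x)"

definition Gamma_AGss :: "('s \<Rightarrow> 'g \<Rightarrow> 's \<Rightarrow> 's) \<Rightarrow> bool" where
  "Gamma_AGss f \<longleftrightarrow> Gamma_AG f \<and> (\<forall>a b c \<alpha> \<beta>. f a \<alpha> (f b \<beta> c) = f b \<alpha> (f a \<beta> c))"

definition gprod :: "('s \<Rightarrow> 'g \<Rightarrow> 's \<Rightarrow> 's) \<Rightarrow> 's set \<Rightarrow> 's set \<Rightarrow> 's set" where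
  "gprod f A B = {f a \<gamma> b | a \<gamma> b. a \<in> A \<and> b \<in> B}"

definition intra_regular :: "('s \<Rightarrow> 'g \<Rightarrow> 's \<Rightarrow> 's) \<Rightarrow> bool" where
  "intra_regular f \<longleftrightarrow> (\<forall>a. \<exists>x y \<beta> \<gamma> \<delta>. a = f (f x \<beta> (f a \<delta> a)) \<gamma> y)"

definition Gamma_12_ideal :: "('s \<Rightarrow> 'g \<Rightarrow> 's \<Rightarrow> 's) \<Rightarrow> 's set \<Rightarrow> bool" where
  "Gamma_12_ideal f A \<longleftrightarrow> A \<noteq> {} \<and> gprod f A A \<subseteq> A \<and>
     gprod f (gprod f A UNIV) (gprod f A A) \<subseteq> A"

end

theory Submission
  imports Defs
begin

lemma gprodI: "a \<in> A \<Longrightarrow> b \<in> B \<Longrightarrow> f a g b \<in> gprod f A B"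
  unfolding gprod_def by blast

lemma key:
  fixes f :: "'s \<Rightarrow> 'g \<Rightarrow> 's \<Rightarrow> 's"
  assumes LI: "\<And>x g y d z. f (f x g y) d z = f (f z g y) d x"
    and AG: "\<And>a al b be c. f a al (f b be c) = f b al (f a be c)"
    and IR: "intra_regular f"
  obtains d g t where "a = f (f a d a) g t"
proof -
  obtain x y \<beta> \<gamma> \<delta> where a0: "a = f (f x \<beta> (f a \<delta> a)) \<gamma> y"
    using IR unfolding intra_regular_def by blast
  define w where "w = f y \<delta> a"
  have a1: "a = f (f a \<beta> w) \<gamma> x"
    using a0 unfolding w_def by (simp only: LI[of x \<beta> "f a \<delta> a" \<gamma> y] AG[of y \<beta> a \<delta> a])
  define u where "u = f x \<beta> w"
  have a2: "a = f u \<gamma> a" using a1 unfolding u_def by (simp only: LI[of a \<beta> w \<gamma> x])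
  have "a = f (f (f u \<gamma> a) \<beta> w) \<gamma> x"
    using a1 arg_cong[where f="\<lambda>z. f (f z \<beta> w) \<gamma> x", OF a2] by simp
  also have "\<dots> = f (f (f w \<gamma> a) \<beta> u) \<gamma> x" by (simp only: LI[of u \<gamma> a \<beta> w])
  also have "\<dots> = f (f x \<beta> u) \<gamma> (f w \<gamma> a)" by (simp only: LI[of "f w \<gamma> a" \<beta> u \<gamma> x])
  also have "\<dots> = f (f x \<beta> u) \<gamma> (f (f a \<delta> a) \<gamma> y)" unfolding w_def by (simp only: LI[of y \<delta> a \<gamma> a])
  also have "\<dots> = f (f a \<delta> a) \<gamma> (f (f x \<beta> u) \<gamma> y)" by (simp only: AG[of "f x \<beta> u" \<gamma> "f a \<delta> a" \<gamma> y])
  finally show ?thesis using that by blast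
qed


lemma main_dir:
  fixes f :: "'s \<Rightarrow> 'g \<Rightarrow> 's \<Rightarrow> 's"
  assumes LI: "\<And>x g y d z. f (f x g y) d z = f (f z g y) d x"
    and AG: "\<And>a al b be c. f a al (f b be c) = f b al (f a be c)"
    and e: "a = f (f a d a) g t"
    and aA: "a \<in> A"
    and I1: "gprod f A A \<subseteq> A"
    and I2: "gprod f (gprod f A UNIV) (gprod f A A) \<subseteq> A"
  shows "a \<in> gprod f A A" and "a \<in> gprod f (gprod f A UNIV) (gprod f A A)"
proof -
  have AA: "\<And>p q h. p \<in> A \<Longrightarrow> q \<in> A \<Longrightarrow> f p h q \<in> A" using I1 gprodI by (metis subsetD)
  define s where "s = f (f t g t) g t"
  note e
  also have "f (f a d a) g t = f (f t d a) g a" by (rule LI)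
  also have "\<dots> = f (f t d (f (f a d a) g t)) g a"
    by (rule arg_cong[where f="\<lambda>z. f (f t d z) g a", OF e])
  also have "\<dots> = f (f (f a d a) d (f t g t)) g a" by (simp only: AG[of t d "f a d a" g t])
  also have "\<dots> = f (f (f (f t g t) d a) d a) g a" by (simp only: LI[of a d a d "f t g t"])
  also have "\<dots> = f (f (f (f t g t) d (f (f a d a) g t)) d a) g a"
    by (rule arg_cong[where f="\<lambda>z. f (f (f (f t g t) d z) d a) g a", OF e])
  also have "\<dots> = f (f (f (f a d a) d s) d a) g a" unfolding s_def
    by (simp only: AG[of "f t g t" d "f a d a" g t])
  also have "\<dots> = f (f (f a d s) d (f a d a)) g a" by (simp only: LI[of "f a d a" d s d a])
  finally have X: "a = f (f (f a d s) d (f a d a)) g a" .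
  have "f (f a d s) d (f a d a) \<in> A"
    using I2 aA by (blast intro: gprodI)
  then show "a \<in> gprod f A A" using X aA AA by (metis gprodI)
  note e
  also have "f (f a d a) g t = f (f a d (f (f a d a) g t)) g t"
    by (rule arg_cong[where f="\<lambda>z. f (f a d z) g t", OF e])
  also have "\<dots> = f (f (f a d a) d (f a g t)) g t" by (simp only: AG[of a d "f a d a" g t])
  also have "\<dots> = f (f t d (f a g t)) g (f a d a)" by (simp only: LI[of "f a d a" d "f a g t" g t])
  also have "\<dots> = f (f a d (f t g t)) g (f a d a)" by (simp only: AG[of t d a g t])
  finally show "a \<in> gprod f (gprod f A UNIV) (gprod f A A)"
    using aA by (metis gprodI UNIV_I)
qed

theorem mainTheorem6:
  fixes f :: "'s \<Rightarrow> 'g \<Rightarrow> 's \<Rightarrow> 's" and A :: "'s set"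
  assumes "Gamma_AGss f" and "intra_regular f" and "A \<noteq> {}"
  shows "Gamma_12_ideal f A \<longleftrightarrow>
           (gprod f (gprod f A UNIV) (gprod f A A) = A \<and> gprod f A A = A)"
proof
  have LI: "\<And>x g y d z. f (f x g y) d z = f (f z g y) d x"
    using assms(1) unfolding Gamma_AGss_def Gamma_AG_def by blast
  have AG: "\<And>a al b be c. f a al (f b be c) = f b al (f a be c)"
    using assms(1) unfolding Gamma_AGss_def by blast
  assume H: "Gamma_12_ideal f A"
  then have I1: "gprod f A A \<subseteq> A" and I2: "gprod f (gprod f A UNIV) (gprod f A A) \<subseteq> A"
    unfolding Gamma_12_ideal_def by auto
  have "\<And>a. a \<in> A \<Longrightarrow> a \<in> gprod f A A \<and> a \<in> gprod f (gprod f A UNIV) (gprod f A A)"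
  proof -
    fix a assume aA: "a \<in> A"
    obtain d g t where e: "a = f (f a d a) g t" using key[OF LI AG assms(2)] by blast
    show "a \<in> gprod f A A \<and> a \<in> gprod f (gprod f A UNIV) (gprod f A A)"
      using main_dir[OF LI AG e aA I1 I2] by blast
  qed
  then show "gprod f (gprod f A UNIV) (gprod f A A) = A \<and> gprod f A A = A"
    using I1 I2 by blast
next
  assume "gprod f (gprod f A UNIV) (gprod f A A) = A \<and> gprod f A A = A"
  then show "Gamma_12_ideal f A" using assms(3) unfolding Gamma_12_ideal_def by auto
qed

end
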